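(* Let $1\le m\le k\le 6$, let $\theta\in(\pi/2,\pi)$ be sufficiently close to $\pi/2$ and $\kappa>0$. For each integer $l\in\{0,1,\dots,k+m\}$ there is a constant $c>0$ independent of $\tau$ and $z$ such that for all $\tau>0$ and $z\in\Gamma^\tau_{\theta,\kappa}$: $$\left|\delta_{\tau,k}^m(e^{-z\tau})\frac{\gamma_l(e^{-z\tau})}{l!}\tau^{l+1}-\frac{z^m}{z^{l+1}}\right|\le\begin{cases} c\,\tau^{l+1}|z|^m+c\,\tau^k|z|^{k+m-l-1}, & l=0\text{ or } l \text{ odd},\\ c\,\tau^{l+2}|z|^{m+1}+c\,\tau^k|z|^{k+m-l-1}, & l\ge 2 \text{ even}.\end{cases}$$
   Context: For $1\le k\le 6$ and $\tau>0$, $\delta_{\tau,k}(\xi)=\frac1\tau\sum_{j=1}^k\frac1j(1-\xi)^j$ (the BDF$k$ generating function). For real $p\ge0$, $\gamma_p(\xi)=\sum_{n=1}^\infty n^p\xi^n$ (analytically continued; for integer $p$ it is rational with only pole at $\xi=1$). For $\theta\in(\pi/2,\pi)$ and $\kappa>0$, $\Gamma_{\theta,\kappa}=\{z\in\mathbb C:|z|=\kappa,|\arg z|\le\theta\}\cup\{z=re^{\pm i\theta}:r\ge\kappa\}$, and $\Gamma^\tau_{\theta,\kappa}=\{z\in\Gamma_{\theta,\kappa}:|\operatorname{Im}z|\le\pi/\tau\}$. *)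

theory Defs
  imports "HOL-Analysis.Analysis"
begin

definition bdf_delta :: "real \<Rightarrow> nat \<Rightarrow> complex \<Rightarrow> complex" where
  "bdf_delta \<tau> k \<xi> = (1 / complex_of_real \<tau>) * (\<Sum>j=1..k. (1 / of_nat j) * (1 - \<xi>) ^ j)"

text \<open>gamma_p(xi) = sum_{n>=1} n^p xi^n for integer p, analytically continued to C - {1}:
  gamma_0(xi) = xi/(1-xi) (the sum of the geometric series), and
  gamma_{p+1}(xi) = xi * gamma_p'(xi) (termwise differentiation of the series).\<close>
fun gamma_int :: "nat \<Rightarrow> complex \<Rightarrow> complex" where
  "gamma_int 0 = (\<lambda>\<xi>. \<xi> / (1 - \<xi>))"
| "gamma_int (Suc p) = (\<lambda>\<xi>. \<xi> * deriv (gamma_int p) \<xi>)"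

definition Gamma_contour :: "real \<Rightarrow> real \<Rightarrow> complex set" where
  "Gamma_contour \<theta> \<kappa> =
     {z. cmod z = \<kappa> \<and> \<bar>Arg z\<bar> \<le> \<theta>} \<union>
     {z. \<exists>r\<ge>\<kappa>. z = complex_of_real r * cis \<theta> \<or> z = complex_of_real r * cis (- \<theta>)}"

definition Gamma_contour_tau :: "real \<Rightarrow> real \<Rightarrow> real \<Rightarrow> complex set" where
  "Gamma_contour_tau \<tau> \<theta> \<kappa> = {z \<in> Gamma_contour \<theta> \<kappa>. \<bar>Im z\<bar> \<le> pi / \<tau>}"

end

theory Submission
  imports Defs "HOL-Complex_Analysis.Complex_Analysis"
begin

lemma gamma_holo: "gamma_int l holomorphic_on (- {1})"
proof (induction l)
  case 0
  show ?case by (auto intro!: holomorphic_intros)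
next
  case (Suc l)
  have "open (- {1::complex})" by auto
  then have "deriv (gamma_int l) holomorphic_on (- {1})" using Suc holomorphic_deriv by blast
  then show ?case by (auto intro!: holomorphic_intros)
qed

definition Phi :: "nat \<Rightarrow> complex \<Rightarrow> complex" where
  "Phi l w = gamma_int l (exp (- w))"

lemma Phi_Suc:
  assumes "exp (- w) \<noteq> 1"
  shows "(Phi l has_field_derivative (- Phi (Suc l) w)) (at w)"
proof -
  have "(gamma_int l has_field_derivative deriv (gamma_int l) (exp (-w))) (at (exp (-w)))"
    using gamma_holo assms by (intro holomorphic_derivI[of _ "-{1}"]) auto
  then have "((\<lambda>w. gamma_int l (exp (-w))) has_field_derivative deriv (gamma_int l) (exp (-w)) * (- exp (-w))) (at w)"
  proof -
    have "((\<lambda>w. exp (-w)) has_field_derivative (- exp (-w))) (at w)"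
      by (auto intro!: derivative_eq_intros)
    from DERIV_chain2[OF \<open>(gamma_int l has_field_derivative _) _\<close> this] show ?thesis .
  qed
  then show ?thesis unfolding Phi_def by (simp add: mult.commute)
qed

definition Gf :: "complex \<Rightarrow> complex" where
  "Gf z = (if z = 0 then 1 else (exp z - 1) / z)"
definition Ef :: "complex \<Rightarrow> complex" where
  "Ef z = (if z = 0 then deriv Gf 0 else (Gf z - 1) / z)"
definition ff :: "complex \<Rightarrow> complex" where
  "ff z = 1/2 - Ef z / Gf z"

lemma Gf_holo: "Gf holomorphic_on UNIV"
proof -
  have "(\<lambda>z. if z = 0 then deriv (\<lambda>z. exp z - 1) 0 else ((exp z - 1) - (exp 0 - 1)) / (z - 0)) holomorphic_on UNIV"
    by (rule pole_lemma_open) (auto intro!: holomorphic_intros)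
  moreover have "deriv (\<lambda>z. exp z - 1) 0 = 1"
    by (rule DERIV_imp_deriv) (auto intro!: derivative_eq_intros)
  moreover have "(\<lambda>z. if z = 0 then deriv (\<lambda>z. exp z - 1) 0 else ((exp z - 1) - (exp 0 - 1)) / (z - 0)) = Gf"
    unfolding calculation(2) by (intro ext) (simp add: Gf_def)
  ultimately show ?thesis by simp
qed

lemma Ef_holo: "Ef holomorphic_on UNIV"
proof -
  have "(\<lambda>z. if z = 0 then deriv Gf 0 else (Gf z - Gf 0) / (z - 0)) holomorphic_on UNIV"
    by (rule pole_lemma_open) (auto intro!: Gf_holo)
  moreover have "(\<lambda>z. if z = 0 then deriv Gf 0 else (Gf z - Gf 0) / (z - 0)) = Ef"
    by (intro ext) (simp add: Ef_def Gf_def)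
  ultimately show ?thesis by simp
qed

lemma Gf_eq: "Gf z = 1 + z * Ef z"
  by (simp add: Ef_def Gf_def)

lemma exp_Gf: "exp z - 1 = z * Gf z"
  by (simp add: Gf_def)

lemma exp_ne_1: assumes "w \<noteq> 0" "\<bar>Im w\<bar> < 2 * pi" shows "exp w \<noteq> 1"
proof
  assume "exp w = 1"
  then obtain n :: int where n: "Re w = 0" "Im w = of_int (2*n) * pi" by (auto simp: exp_eq_1)
  have "n = 0"
  proof (rule ccontr)
    assume "n \<noteq> 0"
    then have "\<bar>real_of_int (2*n)\<bar> \<ge> 2" by linarith
    then have "\<bar>Im w\<bar> \<ge> 2 * pi" using n(2) pi_gt_zero by (simp add: abs_mult)
    then show False using assms by simp
  qed
  then show False using n assms(1) complex_eq_iff by auto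
qed

lemma Gf_nz: assumes "\<bar>Im w\<bar> < 2 * pi" shows "Gf w \<noteq> 0"
  using exp_ne_1[OF _ assms] by (auto simp: Gf_def)

lemma ff_holo: "ff holomorphic_on ball 0 1"
proof -
  have "Gf w \<noteq> 0" if "w \<in> ball 0 1" for w
  proof (rule Gf_nz)
    have "\<bar>Im w\<bar> \<le> cmod w" by (rule abs_Im_le_cmod)
    also have "\<dots> < 1" using that by simp
    also have "1 < 2 * pi" using pi_gt3 by simp
    finally show "\<bar>Im w\<bar> < 2 * pi" .
  qed
  then show ?thesis unfolding ff_def[abs_def]
    by (auto intro!: holomorphic_intros holomorphic_on_subset[OF Gf_holo] holomorphic_on_subset[OF Ef_holo])
qed

lemma Phi0_eq: assumes "w \<noteq> 0" "\<bar>Im w\<bar> < 2 * pi"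
  shows "Phi 0 w = 1 / w - 1/2 + ff w"
proof -
  have e: "exp w \<noteq> 1" using exp_ne_1 assms by blast
  have G: "Gf w \<noteq> 0" using Gf_nz assms by blast
  have "Phi 0 w = 1 / (exp w - 1)"
    using e by (simp add: Phi_def exp_minus field_simps)
  also have "\<dots> = 1 / (w * Gf w)" by (simp add: exp_Gf)
  also have "\<dots> = 1 / w - 1/2 + ff w"
  proof -
    have "1 / (w * Gf w) = 1 / w - Ef w / Gf w"
      using G assms(1) by (simp add: field_simps) (simp add: Gf_eq algebra_simps)
    then show ?thesis by (simp add: ff_def)
  qed
  finally show ?thesis .
qed

lemma Im_small: "cmod w < 1 \<Longrightarrow> \<bar>Im w\<bar> < 2 * pi"
  using abs_Im_le_cmod[of w] pi_gt3 by linarith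

lemma ff_odd_nz: assumes "w \<in> ball 0 1" "w \<noteq> 0" shows "ff (-w) = - ff w"
proof -
  have w1: "cmod w < 1" using assms by simp
  have a: "Phi 0 w = 1 / w - 1/2 + ff w" using Phi0_eq[OF assms(2) Im_small[OF w1]] .
  have b: "Phi 0 (-w) = 1 / (-w) - 1/2 + ff (-w)" using Phi0_eq[of "-w"] assms Im_small[OF w1] by simp
  have e: "exp w \<noteq> 1" using exp_ne_1 assms(2) Im_small[OF w1] by blast
  have e': "exp w - 1 \<noteq> 0" "1 - exp w \<noteq> 0" using e by auto
  have p1: "Phi 0 w = 1 / (exp w - 1)" using e' by (simp add: Phi_def exp_minus field_simps)
  have p2: "Phi 0 (-w) = exp w / (1 - exp w)" by (simp add: Phi_def)
  have "1 / (exp w - 1) + exp w / (1 - exp w) = -1"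
  proof -
    define b where "b = exp w - 1"
    have b0: "b \<noteq> 0" using e' b_def by simp
    have "exp w = b + 1" "1 - exp w = - b" using b_def by simp_all
    then have "1 / (exp w - 1) + exp w / (1 - exp w) = 1 / b + (b + 1) / (- b)" using b_def by simp
    also have "\<dots> = -1" using b0 by (simp add: field_simps)
    finally show ?thesis .
  qed
  then have "Phi 0 w + Phi 0 (-w) = -1" using p1 p2 by simp
  then have c: "Phi 0 (-w) = -1 - Phi 0 w" by (simp add: algebra_simps)
  have "ff (-w) = Phi 0 (-w) + 1/w + 1/2" using b by simp
  also have "\<dots> = -1 - Phi 0 w + 1/w + 1/2" using c by simp
  also have "\<dots> = - (Phi 0 w - 1/w + 1/2)" by simp
  also have "Phi 0 w - 1/w + 1/2 = ff w" using a by simp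
  finally show ?thesis .
qed

lemma ff_0: "ff 0 = 0"
proof -
  have "continuous_on (ball 0 1) ff" using ff_holo holomorphic_on_imp_continuous_on by blast
  then have "\<forall>x\<in>ball 0 1. isCont ff x" using continuous_on_eq_continuous_at[OF open_ball] by blast
  then have c: "isCont ff 0" by simp
  have t1: "((\<lambda>w. ff (-w) + ff w) \<longlongrightarrow> ff (-0) + ff 0) (at 0)"
  proof -
    have u: "isCont uminus (0::complex)" by (intro continuous_intros)
    have c': "isCont ff (- 0)" using c by simp
    have c2: "isCont (\<lambda>w. ff (-w)) 0" using isCont_o2[OF u c'] .
    have "isCont (\<lambda>w. ff (-w) + ff w) 0" by (intro continuous_add c c2)
    then show ?thesis by (simp add: isCont_def)
  qed
  have ev: "eventually (\<lambda>w. ff (-w) + ff w = 0) (at 0)"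
  proof -
    have "eventually (\<lambda>w. w \<in> ball 0 1) (at (0::complex))"
      by (rule eventually_at_in_open') auto
    moreover have "eventually (\<lambda>w. w \<noteq> 0) (at (0::complex))" by (rule eventually_neq_at_within)
    ultimately show ?thesis
    proof eventually_elim
      case (elim w)
      then show ?case using ff_odd_nz[of w] by simp
    qed
  qed
  have t2: "((\<lambda>w. 0) \<longlongrightarrow> ff (-0) + ff 0) (at (0::complex))"
    by (rule Lim_transform_eventually[OF t1 ev])
  have t3: "((\<lambda>w. 0) \<longlongrightarrow> 0) (at (0::complex))" by (rule tendsto_const)
  have "ff (-0) + ff 0 = 0" by (rule tendsto_unique[OF at_neq_bot t2 t3])
  then show ?thesis by simp
qed

lemma ff_odd: assumes "w \<in> ball 0 1" shows "ff (-w) = - ff w"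
  using ff_odd_nz[OF assms] ff_0 by (cases "w = 0") auto

lemma hd_odd: "\<forall>w \<in> ball 0 1. (deriv ^^ n) ff (-w) = (-1)^(n+1) * (deriv ^^ n) ff w"
proof (induction n)
  case 0
  then show ?case using ff_odd by simp
next
  case (Suc n)
  define h where "h = (deriv ^^ n) ff"
  have hh: "h holomorphic_on ball 0 1" unfolding h_def by (intro holomorphic_higher_deriv ff_holo) auto
  show ?case
  proof
    fix w :: complex assume w: "w \<in> ball 0 1"
    have mw: "-w \<in> ball 0 1" using w by simp
    have d1: "(h has_field_derivative deriv h (-w)) (at (-w))"
      using hh mw by (intro holomorphic_derivI[of _ "ball 0 1"]) auto
    have "((\<lambda>v. h (-v)) has_field_derivative deriv h (-w) * (-1)) (at w)"
    proof -
      have "((\<lambda>x. - x) has_field_derivative -1) (at w)" by (auto intro!: derivative_eq_intros)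
      from DERIV_chain2[OF d1 this] show ?thesis by simp
    qed
    moreover have d2: "(h has_field_derivative deriv h w) (at w)"
      using hh w by (intro holomorphic_derivI[of _ "ball 0 1"]) auto
    have "((\<lambda>v. (-1)^(n+1) * h v) has_field_derivative (-1)^(n+1) * deriv h w) (at w)"
      by (intro DERIV_cmult d2)
    then have "((\<lambda>v. h (-v)) has_field_derivative (-1)^(n+1) * deriv h w) (at w)"
      by (rule has_field_derivative_transform_within_open[of _ _ _ "ball 0 1"])
         (use w Suc in \<open>auto simp: h_def\<close>)
    ultimately have "deriv h (-w) * (-1) = (-1)^(n+1) * deriv h w" by (rule DERIV_unique)
    then have "deriv h (-w) = (-1)^(Suc n + 1) * deriv h w" by simp
    then show "(deriv ^^ Suc n) ff (- w) = (-1) ^ (Suc n + 1) * (deriv ^^ Suc n) ff w"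
      by (simp add: h_def)
  qed
qed

lemma hd_even_0: assumes "even n" shows "(deriv ^^ n) ff 0 = 0"
proof -
  have z: "(0::complex) \<in> ball 0 1" by simp
  have "(deriv ^^ n) ff (- 0) = (-1)^(n+1) * (deriv ^^ n) ff 0" using bspec[OF hd_odd[of n] z] by simp
  moreover have "(-1::complex)^(n+1) = -1" using assms by simp
  ultimately have "(deriv ^^ n) ff 0 = - (deriv ^^ n) ff 0" by simp
  then show ?thesis by (simp add: eq_neg_iff_add_eq_0)
qed

lemma d_inv_pow:
  fixes w c :: complex
  assumes "w \<noteq> 0"
  shows "((\<lambda>v. c / v^(n+1)) has_field_derivative (- c * of_nat (n+1) / w^(n+2))) (at w)"
proof -
  have p: "((\<lambda>v. v^(n+1)) has_field_derivative of_nat (n+1) * w^n) (at w)"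
  proof -
    have "((\<lambda>v. v ^ Suc n) has_field_derivative (1 + of_nat n) * (1 * w ^ n)) (at w)"
      by (rule DERIV_power_Suc) (rule DERIV_ident)
    then show ?thesis by (simp add: add.commute)
  qed
  have "((\<lambda>v. c / v^(n+1)) has_field_derivative (0 * w^(n+1) - c * (of_nat (n+1) * w^n)) / (w^(n+1) * w^(n+1))) (at w)"
    by (rule DERIV_divide[OF DERIV_const p]) (use assms in simp)
  moreover have "(0 * w^(n+1) - c * (of_nat (n+1) * w^n)) / (w^(n+1) * w^(n+1)) = - c * of_nat (n+1) / w^(n+2)"
  proof -
    have e: "w^(n+1) * w^(n+1) = w^n * w^(n+2)" by (simp add: power_add[symmetric])
    have "w^n \<noteq> 0" using assms by simp
    then show ?thesis unfolding e by (simp add: divide_simps)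
  qed
  ultimately show ?thesis by simp
qed

lemma alg1: fixes a b d e x :: complex shows "- (- a * b / d + e * x + 0) = a * b / d + (- e) * x"
  by simp

lemma Phi_rep:
  assumes "w \<in> ball 0 1" "w \<noteq> 0"
  shows "Phi l w = fact l / w^(l+1) + (-1)^l * (deriv^^l) ff w + (if l = 0 then -1/2 else 0)"
  using assms
proof (induction l arbitrary: w)
  case 0
  then show ?case using Phi0_eq[of w] Im_small[of w] by simp
next
  case (Suc l)
  define P where "P = ball 0 1 - {0::complex}"
  have oP: "open P" unfolding P_def by auto
  have wP: "w \<in> P" using Suc.prems P_def by auto
  have w1: "cmod w < 1" using Suc.prems by simp
  have e: "exp (- w) \<noteq> 1" using exp_ne_1[of "-w"] Suc.prems Im_small[OF w1] by simp
  define h where "h = (deriv ^^ l) ff"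
  have hh: "h holomorphic_on ball 0 1" unfolding h_def by (intro holomorphic_higher_deriv ff_holo) auto
  have dh: "(h has_field_derivative (deriv ^^ Suc l) ff w) (at w)"
    using holomorphic_derivI[OF hh open_ball Suc.prems(1)] by (simp add: h_def)
  define c :: complex where "c = (if l = 0 then -1/2 else 0)"
  have "((\<lambda>v. fact l / v^(l+1) + (-1)^l * h v + c) has_field_derivative
          (- fact l * of_nat (l+1) / w^(l+2) + (-1)^l * (deriv ^^ Suc l) ff w + 0)) (at w)"
    using DERIV_add[OF DERIV_add[OF d_inv_pow[OF Suc.prems(2), of "fact l" l] DERIV_cmult[OF dh, of "(-1)^l"]] DERIV_const[of c]]
    by (simp add: h_def)
  then have "(Phi l has_field_derivative
          (- fact l * of_nat (l+1) / w^(l+2) + (-1)^l * (deriv ^^ Suc l) ff w + 0)) (at w)"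
    by (rule has_field_derivative_transform_within_open[OF _ oP wP])
       (use Suc.IH in \<open>auto simp: P_def h_def c_def\<close>)
  moreover have "(Phi l has_field_derivative (- Phi (Suc l) w)) (at w)" by (rule Phi_Suc[OF e])
  ultimately have "- Phi (Suc l) w = - fact l * of_nat (l+1) / w^(l+2) + (-1)^l * (deriv ^^ Suc l) ff w + 0"
    by (rule DERIV_unique[rotated])
  then have "Phi (Suc l) w = - (- fact l * of_nat (l+1) / w^(l+2) + (-1)^l * (deriv ^^ Suc l) ff w + 0)"
    by (metis minus_minus)
  also have "\<dots> = fact l * of_nat (l+1) / w^(l+2) + (-1)^(Suc l) * (deriv ^^ Suc l) ff w"
    unfolding alg1 by simp
  finally have "Phi (Suc l) w = fact l * of_nat (l+1) / w^(l+2) + (-1)^(Suc l) * (deriv ^^ Suc l) ff w" .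
  then show ?case by (simp add: fact_Suc algebra_simps)
qed

lemma cont_bound:
  fixes h :: "complex \<Rightarrow> complex"
  assumes "continuous_on S h" "compact S"
  shows "\<exists>M>0. \<forall>x\<in>S. cmod (h x) \<le> M"
proof -
  have "bounded (h ` S)" by (intro compact_imp_bounded compact_continuous_image assms)
  then obtain M where "M > 0" "\<forall>y\<in>h ` S. norm y \<le> M" by (auto simp: bounded_pos)
  then show ?thesis by auto
qed

lemma div_le_self_real: "0 \<le> x \<Longrightarrow> 1 \<le> n \<Longrightarrow> x / n \<le> (x::real)"
  using mult_left_mono[of 1 n x] by (simp add: divide_le_eq)

lemma u_bound:
  assumes "cmod w \<le> 1/4"
  shows "cmod (1 - exp (- w)) \<le> 2 * cmod w"
proof -
  have "norm (exp (- w) - exp (- 0)) \<le> 2 * norm (w - 0)"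
  proof (rule field_differentiable_bound[of "cball 0 (1/4)" _ "\<lambda>v. - exp (- v)"])
    show "convex (cball (0::complex) (1/4))" by simp
    fix z :: complex assume z: "z \<in> cball 0 (1/4)"
    show "((\<lambda>v. exp (- v)) has_field_derivative - exp (- z)) (at z within cball 0 (1/4))"
      by (auto intro!: derivative_eq_intros)
    have "norm (- z) \<le> 1/2" using z by simp
    then show "norm (- exp (- z)) \<le> 2" using exp_bound_half[of "-z"] by simp
  next
    show "w \<in> cball 0 (1/4)" "0 \<in> cball (0::complex) (1/4)" using assms by auto
  qed
  then show ?thesis by (simp add: norm_minus_commute)
qed

definition Dk :: "nat \<Rightarrow> complex \<Rightarrow> complex" where
  "Dk k w = (\<Sum>j=1..k. (1 / of_nat j) * (1 - exp (- w)) ^ j)"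

lemma D_bound:
  assumes "cmod w \<le> 1/4"
  shows "cmod (Dk k w - w) \<le> 2^(k+2) * cmod w ^ (k+1)"
proof -
  define u where "u = 1 - exp (- w)"
  have u2: "cmod u \<le> 2 * cmod w" using u_bound[OF assms] u_def by simp
  then have uh: "cmod u \<le> 1/2" using assms by simp
  have "(\<lambda>n. - ((- (- u))^n) / of_nat n) sums ln (1 + - u)"
    by (rule Ln_series') (use uh in simp)
  moreover have "ln (1 + - u) = - w"
  proof -
    have "\<bar>Im w\<bar> \<le> 1/4" using abs_Im_le_cmod[of w] assms by linarith
    then have "- pi < Im (- w)" "Im (- w) \<le> pi" using pi_gt3 by auto
    then show ?thesis unfolding u_def by simp
  qed
  ultimately have "(\<lambda>n. - (u^n / of_nat n)) sums (- w)" by simp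
  then have s: "(\<lambda>n. u^n / of_nat n) sums w" using sums_minus by fastforce
  define f where "f n = u^n / of_nat n" for n
  have "(\<lambda>i. f (i + (k+1))) sums (w - (\<Sum>i<k+1. f i))"
    using sums_split_initial_segment[OF s[folded f_def], of "k+1"] .
  moreover have "(\<Sum>i<k+1. f i) = Dk k w"
  proof -
    have "(\<Sum>i<k+1. f i) = (\<Sum>i=0..k. f i)" by (rule sum.cong) auto
    also have "\<dots> = (\<Sum>i=Suc 0..k. f i)" by (rule sum_shift_lb_Suc0_0[symmetric]) (simp add: f_def)
    also have "\<dots> = Dk k w" unfolding Dk_def f_def u_def by (intro sum.cong) auto
    finally show ?thesis .
  qed
  ultimately have t: "(\<lambda>i. f (i + (k+1))) sums (w - Dk k w)" by simp
  have gs: "(\<lambda>i. cmod u ^ (k+1) * cmod u ^ i) sums (cmod u ^ (k+1) * (1 / (1 - cmod u)))"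
    by (intro sums_mult geometric_sums) (use uh in simp)
  have "norm (w - Dk k w) = norm (\<Sum>i. f (i + (k+1)))" using t by (simp add: sums_iff)
  also have "\<dots> \<le> (\<Sum>i. cmod u ^ (k+1) * cmod u ^ i)"
  proof (rule norm_suminf_le)
    fix i
    have "norm (f (i + (k+1))) = cmod u ^ (i + (k+1)) / real (i + (k+1))"
      unfolding f_def norm_divide norm_power norm_of_nat ..
    also have "\<dots> \<le> cmod u ^ (i + (k+1))"
      by (rule div_le_self_real) auto
    also have "\<dots> = cmod u ^ (k+1) * cmod u ^ i" by (simp add: power_add)
    finally show "norm (f (i + (k+1))) \<le> cmod u ^ (k+1) * cmod u ^ i" .
  qed (use gs in \<open>simp add: sums_iff\<close>)
  also have "\<dots> = cmod u ^ (k+1) * (1 / (1 - cmod u))" using gs by (simp add: sums_iff)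
  also have "\<dots> \<le> cmod u ^ (k+1) * 2"
  proof (rule mult_left_mono)
    show "1 / (1 - cmod u) \<le> 2" using uh by (simp add: field_simps)
  qed simp
  also have "\<dots> \<le> (2 * cmod w) ^ (k+1) * 2"
    by (intro mult_right_mono power_mono u2) auto
  also have "\<dots> = 2^(k+2) * cmod w ^ (k+1)" by (simp add: power_mult_distrib)
  finally show ?thesis by (simp add: norm_minus_commute)
qed

lemma pow_diff_bound:
  fixes a b :: complex
  assumes "cmod a \<le> M" "cmod b \<le> M"
  shows "cmod (a^(Suc m) - b^(Suc m)) \<le> of_nat (Suc m) * M^m * cmod (a - b)"
proof (induction m)
  case 0
  then show ?case by simp
next
  case (Suc m)
  have M0: "0 \<le> M" using assms(1) norm_ge_zero order_trans by blast
  have "a^(Suc (Suc m)) - b^(Suc (Suc m)) = a * (a^(Suc m) - b^(Suc m)) + (a - b) * b^(Suc m)"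
    by (simp add: algebra_simps)
  then have "cmod (a^(Suc (Suc m)) - b^(Suc (Suc m))) \<le> cmod a * cmod (a^(Suc m) - b^(Suc m)) + cmod (a - b) * cmod b ^ (Suc m)"
    by (metis norm_mult norm_power norm_triangle_ineq)
  also have "\<dots> \<le> M * (of_nat (Suc m) * M^m * cmod (a - b)) + cmod (a - b) * M ^ (Suc m)"
    by (intro add_mono mult_mono Suc power_mono assms mult_left_mono) (auto simp: M0)
  also have "\<dots> = of_nat (Suc (Suc m)) * M^(Suc m) * cmod (a - b)" by (simp add: algebra_simps)
  finally show ?case .
qed

lemma R_bound:
  "\<exists>C>0. \<forall>w. w \<noteq> 0 \<and> cmod w \<le> 1/4 \<longrightarrow>
     cmod (Phi l w / fact l - 1 / w^(l+1)) \<le> (if l = 0 \<or> odd l then C else C * cmod w)"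
proof -
  define h where "h = (deriv ^^ l) ff"
  define h' where "h' = (deriv ^^ Suc l) ff"
  have sub: "cball (0::complex) (1/2) \<subseteq> ball 0 1" by auto
  have hh: "h holomorphic_on ball 0 1" unfolding h_def by (intro holomorphic_higher_deriv ff_holo) auto
  have hh': "h' holomorphic_on ball 0 1" unfolding h'_def by (intro holomorphic_higher_deriv ff_holo) auto
  obtain M1 where M1: "M1 > 0" "\<forall>x\<in>cball 0 (1/2). cmod (h x) \<le> M1"
    using cont_bound[of "cball 0 (1/2)" h] holomorphic_on_imp_continuous_on[OF holomorphic_on_subset[OF hh sub]]
    by auto
  obtain M2 where M2: "M2 > 0" "\<forall>x\<in>cball 0 (1/2). cmod (h' x) \<le> M2"
    using cont_bound[of "cball 0 (1/2)" h'] holomorphic_on_imp_continuous_on[OF holomorphic_on_subset[OF hh' sub]]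
    by auto
  define C where "C = M1 + M2 + 1"
  have "C > 0" using M1 M2 C_def by simp
  moreover have "cmod (Phi l w / fact l - 1 / w^(l+1)) \<le> (if l = 0 \<or> odd l then C else C * cmod w)"
    if w: "w \<noteq> 0" "cmod w \<le> 1/4" for w
  proof -
    have wb: "w \<in> ball 0 1" "w \<in> cball 0 (1/2)" using w by auto
    have f0: "(fact l :: complex) \<noteq> 0" by simp
    have f1: "(1::real) \<le> fact l" by simp
    define c :: complex where "c = (if l = 0 then -1/2 else 0)"
    have "Phi l w / fact l - 1 / w^(l+1) = ((-1)^l * h w + c) / fact l"
      using Phi_rep[OF wb(1) w(1), of l] f0 unfolding h_def c_def by (simp add: field_simps)
    then have eq: "cmod (Phi l w / fact l - 1 / w^(l+1)) = cmod ((-1)^l * h w + c) / fact l"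
      by (simp add: norm_divide)
    show ?thesis
    proof (cases "l = 0 \<or> odd l")
      case True
      have "cmod ((-1)^l * h w + c) \<le> cmod ((-1)^l * h w) + cmod c" by (rule norm_triangle_ineq)
      also have "\<dots> \<le> M1 + 1"
      proof -
        have "cmod (h w) \<le> M1" using M1(2) wb(2) by blast
        moreover have "cmod c \<le> 1" by (simp add: c_def)
        ultimately show ?thesis by (simp add: norm_mult norm_power)
      qed
      finally have "cmod ((-1)^l * h w + c) / fact l \<le> M1 + 1"
        using f1 by (meson div_le_self_real norm_ge_zero order_trans)
      then show ?thesis using True eq C_def M2 by simp
    next
      case False
      then have c0: "c = 0" using c_def by auto
      have "norm (h w - h 0) \<le> M2 * norm (w - 0)"
      proof (rule field_differentiable_bound[of "cball 0 (1/2)" h h'])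
        fix z :: complex assume z: "z \<in> cball 0 (1/2)"
        then have "z \<in> ball 0 1" by auto
        then show "(h has_field_derivative h' z) (at z within cball 0 (1/2))"
          using holomorphic_derivI[OF hh open_ball] by (simp add: h_def h'_def)
        show "norm (h' z) \<le> M2" using M2 z by auto
      qed (use wb in auto)
      moreover have "h 0 = 0" unfolding h_def using hd_even_0 False by auto
      ultimately have "cmod (h w) \<le> M2 * cmod w" by simp
      then have "cmod ((-1)^l * h w + c) \<le> M2 * cmod w" by (simp add: c0 norm_mult norm_power)
      then have "cmod ((-1)^l * h w + c) / fact l \<le> M2 * cmod w"
        using f1 by (meson div_le_self_real norm_ge_zero order_trans)
      also have "\<dots> \<le> C * cmod w" using C_def M1 by (intro mult_right_mono) auto
      finally show ?thesis using False eq by simp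
    qed
  qed
  ultimately show ?thesis by blast
qed

lemma pow_div_powi: "(r::real) > 0 \<Longrightarrow> r^a / r^b = r powi (int a - int b)"
  by (simp add: power_int_diff)

definition Gfun :: "nat \<Rightarrow> nat \<Rightarrow> nat \<Rightarrow> complex \<Rightarrow> complex" where
  "Gfun k m l w = Dk k w ^ m * (Phi l w / fact l) - w ^ m / w ^ (l + 1)"

lemma small_bound:
  assumes "1 \<le> m"
  shows "\<exists>C>0. \<forall>w. w \<noteq> 0 \<and> cmod w \<le> 1/4 \<longrightarrow>
     cmod (Gfun k m l w) \<le> (if l = 0 \<or> odd l then C * cmod w ^ m else C * cmod w ^ (m+1))
        + C * cmod w powi (int k + int m - int l - 1)"
proof -
  obtain CR where CR: "CR > 0" "\<forall>w. w \<noteq> 0 \<and> cmod w \<le> 1/4 \<longrightarrow>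
     cmod (Phi l w / fact l - 1 / w^(l+1)) \<le> (if l = 0 \<or> odd l then CR else CR * cmod w)"
    using R_bound[of l] by blast
  obtain m' where m': "m = Suc m'" using assms by (cases m) auto
  define K :: real where "K = 2^(k+2)"
  define L :: real where "L = 1 + K"
  have Kp: "K > 0" unfolding K_def by simp
  then have K0: "K > 0" "L > 0" "L \<ge> 1" using L_def by auto
  define C1 where "C1 = of_nat m * L^m' * K"
  define C where "C = C1 + L^m * CR + 1"
  have C1pos: "C1 \<ge> 0" using C1_def K0 by simp
  have "C > 0" using C_def C1pos K0 CR by (simp add: add_nonneg_pos)
  moreover have "cmod (Gfun k m l w) \<le> (if l = 0 \<or> odd l then C * cmod w ^ m else C * cmod w ^ (m+1))
        + C * cmod w powi (int k + int m - int l - 1)"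
    if w: "w \<noteq> 0" "cmod w \<le> 1/4" for w
  proof -
    define D where "D = Dk k w"
    define R where "R = Phi l w / fact l - 1 / w^(l+1)"
    have r0: "cmod w > 0" using w by simp
    have r1: "cmod w \<le> 1" using w by simp
    have Dw: "cmod (D - w) \<le> K * cmod w ^ (k+1)" using D_bound[OF w(2)] D_def K_def by simp
    have "cmod w ^ (k+1) \<le> cmod w ^ 1" by (rule power_decreasing) (use r1 in auto)
    then have "K * cmod w ^ (k+1) \<le> K * cmod w" using K0 by (intro mult_left_mono) auto
    then have Db: "cmod D \<le> L * cmod w"
      using Dw norm_triangle_ineq2[of D w] L_def by (simp add: algebra_simps)
    have wb: "cmod w \<le> L * cmod w" using K0 r0 by simp
    have "cmod (D^m - w^m) \<le> of_nat m * (L * cmod w)^m' * cmod (D - w)"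
      using pow_diff_bound[OF Db wb, of m'] m' by simp
    also have "\<dots> \<le> of_nat m * (L * cmod w)^m' * (K * cmod w ^ (k+1))"
      by (intro mult_left_mono Dw) (use K0 r0 in auto)
    also have "\<dots> = C1 * cmod w ^ (m + k)"
      unfolding C1_def using m' by (simp add: power_mult_distrib power_add algebra_simps)
    finally have P1: "cmod (D^m - w^m) \<le> C1 * cmod w ^ (m + k)" .
    have eqG: "Gfun k m l w = (D^m - w^m) / w^(l+1) + D^m * R"
      unfolding Gfun_def D_def R_def using w(1) by (simp add: field_simps)
    have T1: "cmod ((D^m - w^m) / w^(l+1)) \<le> C1 * cmod w powi (int k + int m - int l - 1)"
    proof -
      have "cmod ((D^m - w^m) / w^(l+1)) = cmod (D^m - w^m) / cmod w ^ (l+1)"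
        unfolding norm_divide norm_power ..
      also have "\<dots> \<le> C1 * cmod w ^ (m + k) / cmod w ^ (l+1)"
        by (intro divide_right_mono P1) simp
      also have "\<dots> = C1 * (cmod w ^ (m + k) / cmod w ^ (l+1))" by simp
      also have "cmod w ^ (m + k) / cmod w ^ (l+1) = cmod w powi (int k + int m - int l - 1)"
      proof -
        have "int (m+k) - int (l+1) = int k + int m - int l - 1" by simp
        then show ?thesis using pow_div_powi[OF r0, of "m+k" "l+1"] by metis
      qed
      finally show ?thesis .
    qed
    have Dm: "cmod (D^m) \<le> L^m * cmod w ^ m"
      using power_mono[OF Db, of m] by (simp add: norm_power power_mult_distrib)
    have T2: "cmod (D^m * R) \<le> (if l = 0 \<or> odd l then L^m * CR * cmod w ^ m else L^m * CR * cmod w ^ (m+1))"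
    proof -
      have Rb: "cmod R \<le> (if l = 0 \<or> odd l then CR else CR * cmod w)" using CR(2) w R_def by blast
      have "cmod (D^m * R) \<le> (L^m * cmod w ^ m) * cmod R"
        unfolding norm_mult by (intro mult_right_mono Dm) simp
      also have "\<dots> \<le> (L^m * cmod w ^ m) * (if l = 0 \<or> odd l then CR else CR * cmod w)"
        by (intro mult_left_mono Rb) (use K0 in simp)
      also have "\<dots> = (if l = 0 \<or> odd l then L^m * CR * cmod w ^ m else L^m * CR * cmod w ^ (m+1))"
        by (simp add: algebra_simps)
      finally show ?thesis .
    qed
    have pw: "cmod w powi (int k + int m - int l - 1) \<ge> 0" using r0 by simp
    have "cmod (Gfun k m l w) \<le> cmod ((D^m - w^m) / w^(l+1)) + cmod (D^m * R)"
      unfolding eqG by (rule norm_triangle_ineq)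
    also have "\<dots> \<le> C1 * cmod w powi (int k + int m - int l - 1) +
        (if l = 0 \<or> odd l then L^m * CR * cmod w ^ m else L^m * CR * cmod w ^ (m+1))"
      using T1 T2 by simp
    also have "\<dots> \<le> (if l = 0 \<or> odd l then C * cmod w ^ m else C * cmod w ^ (m+1))
        + C * cmod w powi (int k + int m - int l - 1)"
    proof -
      have a: "C1 * cmod w powi (int k + int m - int l - 1) \<le> C * cmod w powi (int k + int m - int l - 1)"
        using pw C_def K0 CR by (intro mult_right_mono) auto
      have b: "L^m * CR \<le> C" using C_def C1pos by simp
      have "L^m * CR * cmod w ^ m \<le> C * cmod w ^ m" "L^m * CR * cmod w ^ (m+1) \<le> C * cmod w ^ (m+1)"
        using b by (intro mult_right_mono; simp)+
      then show ?thesis using a by auto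
    qed
    finally show ?thesis .
  qed
  ultimately show ?thesis by blast
qed

definition Hf :: "nat \<Rightarrow> nat \<Rightarrow> nat \<Rightarrow> complex \<Rightarrow> complex" where
  "Hf k m l \<xi> = (\<Sum>j=1..k. (1 / of_nat j) * (1 - \<xi>) ^ j) ^ m * (gamma_int l \<xi> / fact l)"

lemma Hf_cont: "continuous_on (- {1}) (Hf k m l)"
proof -
  have "Hf k m l holomorphic_on (- {1})"
    unfolding Hf_def[abs_def] by (intro holomorphic_intros gamma_holo) simp
  then show ?thesis by (rule holomorphic_on_imp_continuous_on)
qed

lemma Hf_Phi: "Dk k w ^ m * (Phi l w / fact l) = Hf k m l (exp (- w))"
  by (simp add: Dk_def Hf_def Phi_def)

lemma large_bound:
  assumes "A \<ge> 0"
  shows "\<exists>B>0. \<forall>w. \<bar>Im w\<bar> \<le> pi \<and> Re w \<ge> - A \<and> cmod w \<ge> 1/4 \<longrightarrow>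
           cmod (Dk k w ^ m * (Phi l w / fact l)) \<le> B"
proof -
  define K2 where "K2 = {w. \<bar>Im w\<bar> \<le> pi \<and> - A \<le> Re w \<and> Re w \<le> 1 \<and> 1/4 \<le> cmod w}"
  have "closed K2"
    unfolding K2_def
    by (intro closed_Collect_conj closed_Collect_le continuous_intros)
  moreover have "bounded K2"
  proof -
    have "K2 \<subseteq> cball 0 (A + 1 + pi)"
    proof
      fix w assume "w \<in> K2"
      then have "\<bar>Im w\<bar> \<le> pi" "\<bar>Re w\<bar> \<le> A + 1" using assms unfolding K2_def by auto
      then show "w \<in> cball 0 (A + 1 + pi)" using cmod_le[of w] by simp
    qed
    then show ?thesis using bounded_subset bounded_cball by blast
  qed
  ultimately have cK2: "compact K2" by (simp add: compact_eq_bounded_closed)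
  have img: "(\<lambda>w. exp (- w)) ` K2 \<subseteq> - {1}"
  proof
    fix x assume "x \<in> (\<lambda>w. exp (- w)) ` K2"
    then obtain w where w: "w \<in> K2" "x = exp (- w)" by auto
    have "- w \<noteq> 0" using w unfolding K2_def by auto
    moreover have "\<bar>Im (- w)\<bar> < 2 * pi"
    proof -
      have "\<bar>Im w\<bar> \<le> pi" using w unfolding K2_def by auto
      then show ?thesis using pi_gt_zero by (simp only: uminus_complex.sel abs_minus_cancel)
    qed
    ultimately show "x \<in> - {1}" using exp_ne_1 w by auto
  qed
  have "continuous_on K2 (\<lambda>w. Hf k m l (exp (- w)))"
    by (rule continuous_on_compose2[OF Hf_cont _ img]) (intro continuous_intros)
  then obtain B2 where B2: "B2 > 0" "\<forall>w\<in>K2. cmod (Hf k m l (exp (- w))) \<le> B2"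
    using cont_bound[OF _ cK2] by blast
  have e1: "exp (-1) < (1::real)" by simp
  have sub1: "cball 0 (exp (-1)) \<subseteq> - {1::complex}" using e1 by auto
  have "continuous_on (cball 0 (exp (-1))) (Hf k m l)"
    by (rule continuous_on_subset[OF Hf_cont sub1])
  then obtain B1 where B1: "B1 > 0" "\<forall>x\<in>cball 0 (exp (-1)). cmod (Hf k m l x) \<le> B1"
    using cont_bound[OF _ compact_cball] by blast
  have "B1 + B2 > 0" using B1 B2 by simp
  moreover have "cmod (Dk k w ^ m * (Phi l w / fact l)) \<le> B1 + B2"
    if w: "\<bar>Im w\<bar> \<le> pi" "Re w \<ge> - A" "cmod w \<ge> 1/4" for w
  proof (cases "Re w \<le> 1")
    case True
    then have "w \<in> K2" using w unfolding K2_def by auto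
    then show ?thesis using B2 B1 Hf_Phi by (metis add.commute add_increasing2 less_imp_le)
  next
    case False
    have "cmod (exp (- w)) = exp (- Re w)" by simp
    also have "\<dots> \<le> exp (-1)" using False by simp
    finally have "exp (- w) \<in> cball 0 (exp (-1))" by simp
    then show ?thesis using B2 B1 Hf_Phi by (metis add_increasing2 less_imp_le)
  qed
  ultimately show ?thesis by blast
qed

lemma core_bound:
  assumes "1 \<le> m" "A \<ge> 0"
  shows "\<exists>c>0. \<forall>w. w \<noteq> 0 \<and> \<bar>Im w\<bar> \<le> pi \<and> Re w \<ge> - A \<longrightarrow>
     cmod (Gfun k m l w) \<le> (if l = 0 \<or> odd l then c * cmod w ^ m else c * cmod w ^ (m+1))
        + c * cmod w powi (int k + int m - int l - 1)"
proof -
  obtain C where C: "C > 0" "\<forall>w. w \<noteq> 0 \<and> cmod w \<le> 1/4 \<longrightarrow>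
     cmod (Gfun k m l w) \<le> (if l = 0 \<or> odd l then C * cmod w ^ m else C * cmod w ^ (m+1))
        + C * cmod w powi (int k + int m - int l - 1)"
    using small_bound[OF assms(1), of k l] by blast
  obtain B where B: "B > 0" "\<forall>w. \<bar>Im w\<bar> \<le> pi \<and> Re w \<ge> - A \<and> cmod w \<ge> 1/4 \<longrightarrow>
           cmod (Dk k w ^ m * (Phi l w / fact l)) \<le> B"
    using large_bound[OF assms(2), of k m l] by blast
  define C3 :: real where "C3 = B * 4^m + 4^(l+1)"
  define c where "c = C + 4 * C3"
  have C3p: "C3 > 0" unfolding C3_def using B(1) by (intro add_pos_pos mult_pos_pos) auto
  have "c > 0" using C C3p c_def by simp
  moreover have "cmod (Gfun k m l w) \<le> (if l = 0 \<or> odd l then c * cmod w ^ m else c * cmod w ^ (m+1))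
        + c * cmod w powi (int k + int m - int l - 1)"
    if w: "w \<noteq> 0" "\<bar>Im w\<bar> \<le> pi" "Re w \<ge> - A" for w
  proof (cases "cmod w \<le> 1/4")
    case True
    then have h: "cmod (Gfun k m l w) \<le> (if l = 0 \<or> odd l then C * cmod w ^ m else C * cmod w ^ (m+1))
        + C * cmod w powi (int k + int m - int l - 1)" using C w by blast
    have r0: "cmod w > 0" using w by simp
    have pw: "cmod w powi (int k + int m - int l - 1) \<ge> 0" using r0 by simp
    have Cc: "C \<le> c" using c_def C3p by simp
    have "C * cmod w ^ m \<le> c * cmod w ^ m" "C * cmod w ^ (m+1) \<le> c * cmod w ^ (m+1)"
         "C * cmod w powi (int k + int m - int l - 1) \<le> c * cmod w powi (int k + int m - int l - 1)"
      using Cc r0 pw by (intro mult_right_mono; simp)+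
    then show ?thesis using h by (auto split: if_splits)
  next
    case False
    then have w4: "cmod w \<ge> 1/4" by simp
    have r0: "cmod w > 0" using w by simp
    have pw: "cmod w powi (int k + int m - int l - 1) \<ge> 0" using r0 by simp
    have b1: "cmod (Dk k w ^ m * (Phi l w / fact l)) \<le> B" using B w w4 by blast
    have "(1/4::real)^m \<le> cmod w ^ m" by (rule power_mono) (use w4 in auto)
    then have "1 \<le> 4^m * cmod w ^ m" by (simp add: power_divide field_simps)
    then have b2: "B \<le> B * 4^m * cmod w ^ m" using B by (metis mult.assoc mult_le_cancel_left1 less_imp_le not_le)
    have "(1/4::real)^(l+1) \<le> cmod w ^ (l+1)" by (rule power_mono) (use w4 in auto)
    then have i4: "1 / cmod w ^ (l+1) \<le> 4^(l+1)" using r0 by (simp add: power_divide field_simps)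
    have "cmod (w^m / w^(l+1)) = cmod w ^ m / cmod w ^ (l+1)"
      unfolding norm_divide norm_power ..
    also have "\<dots> = cmod w ^ m * (1 / cmod w ^ (l+1))" by simp
    also have "\<dots> \<le> cmod w ^ m * 4^(l+1)" by (intro mult_left_mono i4) simp
    finally have b3: "cmod (w^m / w^(l+1)) \<le> 4^(l+1) * cmod w ^ m" by (simp only: mult.commute)
    have "cmod (Gfun k m l w) \<le> cmod (Dk k w ^ m * (Phi l w / fact l)) + cmod (w^m / w^(l+1))"
      unfolding Gfun_def by (rule norm_triangle_ineq4)
    also have "\<dots> \<le> C3 * cmod w ^ m" using b1 b2 b3 C3_def by (simp add: algebra_simps)
    finally have g: "cmod (Gfun k m l w) \<le> C3 * cmod w ^ m" .
    have "C3 * cmod w ^ m \<le> c * cmod w ^ m" using c_def C C3p r0 by (intro mult_right_mono) auto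
    moreover have "C3 * cmod w ^ m \<le> c * cmod w ^ (m+1)"
    proof -
      have "C3 * cmod w ^ m = C3 * cmod w ^ m * 1" by simp
      also have "\<dots> \<le> C3 * cmod w ^ m * (4 * cmod w)" using w4 C3p r0 by (intro mult_left_mono) auto
      also have "\<dots> = (4 * C3) * cmod w ^ (m+1)" by (simp add: algebra_simps)
      also have "\<dots> \<le> c * cmod w ^ (m+1)" using c_def C r0 by (intro mult_right_mono) auto
      finally show ?thesis .
    qed
    moreover have "0 \<le> c * cmod w powi (int k + int m - int l - 1)" using pw C C3p c_def by simp
    ultimately show ?thesis using g by auto
  qed
  ultimately show ?thesis by blast
qed

lemma arg_ineq:
  assumes "z \<noteq> 0" "\<bar>Arg z\<bar> \<le> \<theta>" "\<theta> < pi"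
  shows "cos \<theta> * \<bar>Im z\<bar> \<le> Re z * sin \<theta>"
proof -
  define \<phi> where "\<phi> = \<bar>Arg z\<bar>"
  have c: "Re z = cmod z * cos \<phi>" using cos_Arg[OF assms(1)] assms(1) by (simp add: \<phi>_def)
  have s: "\<bar>Im z\<bar> = cmod z * sin \<phi>"
  proof -
    have "Im z = cmod z * sin (Arg z)" using sin_Arg[OF assms(1)] assms(1) by simp
    moreover have "\<bar>sin (Arg z)\<bar> = sin \<phi>"
    proof (cases "Arg z \<ge> 0")
      case True
      then show ?thesis using sin_ge_zero[of "Arg z"] Arg_le_pi[of z] by (simp add: \<phi>_def)
    next
      case False
      then show ?thesis using sin_ge_zero[of "- Arg z"] mpi_less_Arg[of z] by (simp add: \<phi>_def)
    qed
    ultimately show ?thesis by (simp add: abs_mult)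
  qed
  have "0 \<le> sin (\<theta> - \<phi>)" using assms \<phi>_def by (intro sin_ge_zero) auto
  then have "0 \<le> sin \<theta> * cos \<phi> - cos \<theta> * sin \<phi>" by (simp add: sin_diff)
  then have "0 \<le> cmod z * (sin \<theta> * cos \<phi> - cos \<theta> * sin \<phi>)" by simp
  then show ?thesis using c s by (simp add: algebra_simps)
qed

lemma contour_ineq:
  assumes "z \<in> Gamma_contour \<theta> \<kappa>" "\<kappa> > 0" "pi/2 < \<theta>" "\<theta> < pi"
  shows "z \<noteq> 0 \<and> cos \<theta> * \<bar>Im z\<bar> \<le> Re z * sin \<theta>"
proof -
  have st: "sin \<theta> > 0" using assms by (intro sin_gt_zero) auto
  consider (circ) "cmod z = \<kappa>" "\<bar>Arg z\<bar> \<le> \<theta>"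
    | (ray) r where "r \<ge> \<kappa>" "z = complex_of_real r * cis \<theta> \<or> z = complex_of_real r * cis (- \<theta>)"
    using assms(1) unfolding Gamma_contour_def by blast
  then show ?thesis
  proof cases
    case circ
    then have "z \<noteq> 0" using assms by auto
    then show ?thesis using arg_ineq circ assms by blast
  next
    case ray
    then have r0: "r > 0" using assms by simp
    from ray(2) show ?thesis
    proof
      assume z: "z = complex_of_real r * cis \<theta>"
      have "z \<noteq> 0" using z r0 by simp
      moreover have "Re z = r * cos \<theta>" "Im z = r * sin \<theta>" using z by simp_all
      ultimately show ?thesis using r0 st by (simp add: abs_mult)
    next
      assume z: "z = complex_of_real r * cis (- \<theta>)"
      have "z \<noteq> 0" using z r0 by simp
      moreover have "Re z = r * cos \<theta>" "Im z = - (r * sin \<theta>)" using z by simp_all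
      ultimately show ?thesis using r0 st by (simp add: abs_mult)
    qed
  qed
qed

lemma scale_expr:
  assumes "\<tau> > 0" "z \<noteq> 0"
  shows "cmod (bdf_delta \<tau> k (exp (- z * complex_of_real \<tau>)) ^ m
                      * (gamma_int l (exp (- z * complex_of_real \<tau>)) / of_nat (fact l))
                      * complex_of_real \<tau> ^ (l + 1)
                    - z ^ m / z ^ (l + 1))
         = \<tau>^(l+1) / \<tau>^m * cmod (Gfun k m l (z * complex_of_real \<tau>))"
proof -
  define t where "t = complex_of_real \<tau>"
  define w where "w = z * t"
  have t0: "t \<noteq> 0" using assms t_def by simp
  have ew: "exp (- z * t) = exp (- w)" by (simp add: w_def)
  have bd: "bdf_delta \<tau> k (exp (- w)) = (1 / t) * Dk k w"
    by (simp add: bdf_delta_def Dk_def t_def)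
  define E where "E = bdf_delta \<tau> k (exp (- w)) ^ m * (gamma_int l (exp (- w)) / of_nat (fact l)) * t ^ (l + 1)
                    - z ^ m / z ^ (l + 1)"
  have E2: "E = ((1 / t) * Dk k w) ^ m * (Phi l w / fact l) * t ^ (l + 1) - z ^ m / z ^ (l + 1)"
    unfolding E_def bd Phi_def by simp
  have "t^m * E = t^(l+1) * Gfun k m l w"
    unfolding E2 Gfun_def w_def using t0 assms(2)
    by (simp add: field_simps power_mult_distrib)
  then have "E = t^(l+1) / t^m * Gfun k m l w" using t0 by (simp add: field_simps)
  then have "cmod E = \<tau>^(l+1) / \<tau>^m * cmod (Gfun k m l w)"
    using assms(1) by (simp add: norm_mult norm_divide norm_power t_def)
  then show ?thesis unfolding E_def using ew by (simp add: t_def w_def)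
qed

theorem lemma3p3:
  fixes m k :: nat
  assumes "1 \<le> m" and "m \<le> k" and "k \<le> 6"
  shows "\<exists>\<theta>\<^sub>0 > pi / 2. \<forall>\<theta> \<kappa> (l::nat).
           pi / 2 < \<theta> \<and> \<theta> < pi \<and> \<theta> \<le> \<theta>\<^sub>0 \<and> \<kappa> > 0 \<and> l \<le> k + m \<longrightarrow>
           (\<exists>c > 0. \<forall>\<tau> > 0. \<forall>z \<in> Gamma_contour_tau \<tau> \<theta> \<kappa>.
              cmod (bdf_delta \<tau> k (exp (- z * complex_of_real \<tau>)) ^ m
                      * (gamma_int l (exp (- z * complex_of_real \<tau>)) / of_nat (fact l))
                      * complex_of_real \<tau> ^ (l + 1)
                    - z ^ m / z ^ (l + 1))
              \<le> (if l = 0 \<or> odd l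
                  then c * \<tau> ^ (l + 1) * cmod z ^ m + c * \<tau> ^ k * cmod z powi (int k + int m - int l - 1)
                  else c * \<tau> ^ (l + 2) * cmod z ^ (m + 1) + c * \<tau> ^ k * cmod z powi (int k + int m - int l - 1)))"
proof -
  have "pi / 2 < pi" by simp
  moreover have "\<forall>\<theta> \<kappa> (l::nat).
           pi / 2 < \<theta> \<and> \<theta> < pi \<and> \<theta> \<le> pi \<and> \<kappa> > 0 \<and> l \<le> k + m \<longrightarrow>
           (\<exists>c > 0. \<forall>\<tau> > 0. \<forall>z \<in> Gamma_contour_tau \<tau> \<theta> \<kappa>.
              cmod (bdf_delta \<tau> k (exp (- z * complex_of_real \<tau>)) ^ m
                      * (gamma_int l (exp (- z * complex_of_real \<tau>)) / of_nat (fact l))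
                      * complex_of_real \<tau> ^ (l + 1)
                    - z ^ m / z ^ (l + 1))
              \<le> (if l = 0 \<or> odd l
                  then c * \<tau> ^ (l + 1) * cmod z ^ m + c * \<tau> ^ k * cmod z powi (int k + int m - int l - 1)
                  else c * \<tau> ^ (l + 2) * cmod z ^ (m + 1) + c * \<tau> ^ k * cmod z powi (int k + int m - int l - 1)))"
  proof (intro allI impI)
    fix \<theta> \<kappa> :: real and l :: nat
    assume H: "pi / 2 < \<theta> \<and> \<theta> < pi \<and> \<theta> \<le> pi \<and> \<kappa> > 0 \<and> l \<le> k + m"
    have st: "sin \<theta> > 0" using H by (intro sin_gt_zero) auto
    have ct: "cos \<theta> < 0"
    proof -
      have "cos (pi - \<theta>) > 0" using H by (intro cos_gt_zero_pi) auto
      then show ?thesis by simp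
    qed
    define A where "A = - pi * cos \<theta> / sin \<theta>"
    have "pi * cos \<theta> / sin \<theta> \<le> 0"
      by (intro divide_nonpos_pos mult_nonneg_nonpos) (use st ct in auto)
    then have A0: "A \<ge> 0" unfolding A_def by simp
    obtain c where c: "c > 0" "\<forall>w. w \<noteq> 0 \<and> \<bar>Im w\<bar> \<le> pi \<and> Re w \<ge> - A \<longrightarrow>
     cmod (Gfun k m l w) \<le> (if l = 0 \<or> odd l then c * cmod w ^ m else c * cmod w ^ (m+1))
        + c * cmod w powi (int k + int m - int l - 1)"
      using core_bound[OF assms(1) A0, of k l] by blast
    show "\<exists>c > 0. \<forall>\<tau> > 0. \<forall>z \<in> Gamma_contour_tau \<tau> \<theta> \<kappa>.
              cmod (bdf_delta \<tau> k (exp (- z * complex_of_real \<tau>)) ^ m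
                      * (gamma_int l (exp (- z * complex_of_real \<tau>)) / of_nat (fact l))
                      * complex_of_real \<tau> ^ (l + 1)
                    - z ^ m / z ^ (l + 1))
              \<le> (if l = 0 \<or> odd l
                  then c * \<tau> ^ (l + 1) * cmod z ^ m + c * \<tau> ^ k * cmod z powi (int k + int m - int l - 1)
                  else c * \<tau> ^ (l + 2) * cmod z ^ (m + 1) + c * \<tau> ^ k * cmod z powi (int k + int m - int l - 1))"
    proof (intro exI[of _ c] conjI allI impI ballI)
      show "c > 0" by (rule c(1))
      fix \<tau> :: real and z assume tau: "\<tau> > 0" and z: "z \<in> Gamma_contour_tau \<tau> \<theta> \<kappa>"
      have zG: "z \<in> Gamma_contour \<theta> \<kappa>" and zI: "\<bar>Im z\<bar> \<le> pi / \<tau>"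
        using z unfolding Gamma_contour_tau_def by auto
      have z0: "z \<noteq> 0" and zc: "cos \<theta> * \<bar>Im z\<bar> \<le> Re z * sin \<theta>"
        using contour_ineq[OF zG] H by auto
      define w where "w = z * complex_of_real \<tau>"
      have w0: "w \<noteq> 0" using z0 tau w_def by simp
      have Imw: "Im w = Im z * \<tau>" "Re w = Re z * \<tau>" by (simp_all add: w_def)
      have wI: "\<bar>Im w\<bar> \<le> pi" using zI tau Imw by (simp add: abs_mult field_simps)
      have "cos \<theta> * \<bar>Im w\<bar> \<le> Re w * sin \<theta>"
        using mult_right_mono[OF zc, of \<tau>] tau Imw by (simp add: abs_mult algebra_simps)
      moreover have "cos \<theta> * pi \<le> cos \<theta> * \<bar>Im w\<bar>" using wI ct by (intro mult_left_mono_neg) auto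
      ultimately have "cos \<theta> * pi \<le> Re w * sin \<theta>" by linarith
      then have wR: "Re w \<ge> - A" using st unfolding A_def by (simp add: field_simps)
      have Gb: "cmod (Gfun k m l w) \<le> (if l = 0 \<or> odd l then c * cmod w ^ m else c * cmod w ^ (m+1))
        + c * cmod w powi (int k + int m - int l - 1)" using c(2) w0 wI wR by blast
      define s where "s = \<tau>^(l+1) / \<tau>^m"
      have s0: "s > 0" using tau s_def by simp
      have nw: "cmod w = \<tau> * cmod z" using tau by (simp add: w_def norm_mult)
      have e1: "s * (c * cmod w ^ m) = c * \<tau> ^ (l + 1) * cmod z ^ m"
        using tau unfolding s_def nw by (simp add: power_mult_distrib field_simps)
      have e2: "s * (c * cmod w ^ (m+1)) = c * \<tau> ^ (l + 2) * cmod z ^ (m + 1)"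
        using tau unfolding s_def nw by (simp add: power_mult_distrib field_simps)
      have e3: "s * (c * cmod w powi (int k + int m - int l - 1)) = c * \<tau> ^ k * cmod z powi (int k + int m - int l - 1)"
      proof -
        have "s = \<tau> powi (int (l+1) - int m)" unfolding s_def by (rule pow_div_powi[OF tau])
        then have "s * \<tau> powi (int k + int m - int l - 1) = \<tau> powi ((int (l+1) - int m) + (int k + int m - int l - 1))"
          using power_int_add[of \<tau> "int (l+1) - int m" "int k + int m - int l - 1"] tau by simp
        also have "(int (l+1) - int m) + (int k + int m - int l - 1) = int k" by simp
        finally have "s * \<tau> powi (int k + int m - int l - 1) = \<tau> ^ k" by simp
        moreover have "cmod w powi (int k + int m - int l - 1) = \<tau> powi (int k + int m - int l - 1) * cmod z powi (int k + int m - int l - 1)"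
          unfolding nw by (rule power_int_mult_distrib)
        ultimately show ?thesis by (metis (no_types, lifting) mult.assoc mult.left_commute)
      qed
      have "cmod (bdf_delta \<tau> k (exp (- z * complex_of_real \<tau>)) ^ m
                      * (gamma_int l (exp (- z * complex_of_real \<tau>)) / of_nat (fact l))
                      * complex_of_real \<tau> ^ (l + 1)
                    - z ^ m / z ^ (l + 1)) = s * cmod (Gfun k m l w)"
        unfolding s_def w_def by (rule scale_expr[OF tau z0])
      also have "\<dots> \<le> s * ((if l = 0 \<or> odd l then c * cmod w ^ m else c * cmod w ^ (m+1))
        + c * cmod w powi (int k + int m - int l - 1))" using s0 Gb by (intro mult_left_mono) auto
      also have "\<dots> = (if l = 0 \<or> odd l
                  then c * \<tau> ^ (l + 1) * cmod z ^ m + c * \<tau> ^ k * cmod z powi (int k + int m - int l - 1)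
                  else c * \<tau> ^ (l + 2) * cmod z ^ (m + 1) + c * \<tau> ^ k * cmod z powi (int k + int m - int l - 1))"
        by (cases "l = 0 \<or> odd l") (simp_all only: if_True if_False distrib_left e1 e2 e3)
      finally show "cmod (bdf_delta \<tau> k (exp (- z * complex_of_real \<tau>)) ^ m
                      * (gamma_int l (exp (- z * complex_of_real \<tau>)) / of_nat (fact l))
                      * complex_of_real \<tau> ^ (l + 1)
                    - z ^ m / z ^ (l + 1))
              \<le> (if l = 0 \<or> odd l
                  then c * \<tau> ^ (l + 1) * cmod z ^ m + c * \<tau> ^ k * cmod z powi (int k + int m - int l - 1)
                  else c * \<tau> ^ (l + 2) * cmod z ^ (m + 1) + c * \<tau> ^ k * cmod z powi (int k + int m - int l - 1))" .
    qed
  qed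
  ultimately show ?thesis by blast
qed

end
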